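(* Let $\Phi=\forall u_1\ldots\forall u_n\exists e_1(D_1)\ldots\exists e_m(D_m).\varphi$ be a DQBF. In any run of Algorithm 1 (as described in the context) on $\Phi$, for each clause $C$ added to the clause set $\mathcal{C}$ in Phase 2, some clause $C'\subseteq C$ (reading each arbiter variable $e^\sigma$ as the annotated variable $e^\sigma$) is derivable from $\Phi$ in the $\forall$Exp+Res calculus.
   Context: For a set $V$ of variables, $[V]$ is the set of assignments $V\to\{\textsc{true},\textsc{false}\}$; assignments are identified with terms of the literals they make true, $\neg\sigma$ is the clause of the negations of these literals, and $\sigma|_W$ denotes restriction. A DQBF is $\Phi=\forall u_1\ldots\forall u_n\exists e_1(D_1)\ldots\exists e_m(D_m).\varphi$ with pairwise distinct variables, $U=\{u_i\}$, $E=\{e_j\}$, dependency sets $D(e_j)=D_j\subseteq U$, $\varphi$ a CNF over $U\cup E$. A definition of a variable $x$ by a set $X$ in a formula $\chi$ is a formula $\psi$ with $\mathit{var}(\psi)\subseteq X$ such that every satisfying assignment $\lambda$ of $\chi$ has $\lambda(x)=\psi[\lambda]$. Arbiter variables $e^\sigma$ ($e\in E$, $\sigma\in[D(e)]$) are fresh variables. Algorithm 1. Phase 1: set $A=\emptyset$, $\varphi_A=\emptyset$, $\psi_{\mathit{Def}}=$ empty conjunction. For $i=1,\dots,m$: while $e_i$ has no definition by $A\cup D_i$ in $\varphi\wedge\varphi_A$, choose $\xi\in[D_i\cup A]$ such that both $\varphi\wedge\varphi_A\wedge\xi\wedge e_i$ and $\varphi\wedge\varphi_A\wedge\xi\wedge\neg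 e_i$ are satisfiable, let $\sigma=\xi|_{D_i}$, add $e_i^\sigma$ to $A$ and the clauses $(e_i^\sigma\vee\neg\sigma\vee\neg e_i)$, $(\neg e_i^\sigma\vee\neg\sigma\vee e_i)$ to $\varphi_A$. Then choose a definition $\psi^i$ of $e_i$ by $A\cup D_i$ in $\varphi\wedge\varphi_A$ and conjoin $(e_i\leftrightarrow\psi^i)$ to $\psi_{\mathit{Def}}$. Phase 2: let $\tau\in[A]$ set all arbiter variables true, $\mathcal{C}=\emptyset$. Repeat: if $\neg\varphi\wedge\psi_{\mathit{Def}}\wedge\tau$ is unsatisfiable, return TRUE; otherwise choose a satisfying assignment $\sigma$ of it, choose a subset $\rho$ of the literals of $\tau\wedge\sigma|_U$ with $\varphi\wedge\varphi_A\wedge\rho$ unsatisfiable, add the clause $\neg(\rho|_A)$ to $\mathcal{C}$; if $\mathcal{C}$ is satisfiable, let $\tau\in[A]$ satisfy $\mathcal{C}$ and repeat, else return FALSE. The $\forall$Exp+Res calculus for $\Phi$ works on clauses over annotated variables $x^\tau$ ($x\in E$, $\tau\in[D(x)]$; different annotations give different variables; $\ell^\tau$ is the literal on $\mathit{var}(\ell)^\tau$ with the polarity of $\ell$) with rules: (axiom) for any $C\in\varphi$ and any $\sigma\in[U]$ falsifying every universal literal of $C$, derive $\{\ell^{\sigma|_{D(\mathit{var}(\ell))}}\mid\ell\in C,\ \mathit{var}(\ell)\in E\}$; (resolution) from $C_1\cup\{x^\tau\}$ and $C_2\cup\{\neg x^\tau\}$ derive $C_1\cup C_2$. A clause is derivable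 if it ends a finite sequence of clauses each obtained by a rule from earlier ones. *)

theory Defs
  imports Main
begin

text \<open>An arbiter variable e^sigma is represented as Ann e sigma;
  the same constructor is used for the annotated variables of the
  forall-Exp+Res calculus, so that reading an arbiter variable as an annotated
  variable is the identity.\<close>
datatype 'v var = Orig 'v | Ann 'v "'v \<rightharpoonup> bool"

datatype 'x lit = Pos 'x | Neg 'x

fun lvar :: "'x lit \<Rightarrow> 'x" where
  "lvar (Pos x) = x" | "lvar (Neg x) = x"

fun lneg :: "'x lit \<Rightarrow> 'x lit" where
  "lneg (Pos x) = Neg x" | "lneg (Neg x) = Pos x"

fun lholds :: "('x \<Rightarrow> bool) \<Rightarrow> 'x lit \<Rightarrow> bool" where
  "lholds lam (Pos x) = lam x" | "lholds lam (Neg x) = (\<not> lam x)"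

text \<open>Partial assignment (an element of [V] when its domain is V) holding a literal.\<close>
fun pholds :: "('x \<rightharpoonup> bool) \<Rightarrow> 'x lit \<Rightarrow> bool" where
  "pholds \<sigma> (Pos x) = (\<sigma> x = Some True)" | "pholds \<sigma> (Neg x) = (\<sigma> x = Some False)"

definition term_of :: "('x \<rightharpoonup> bool) \<Rightarrow> 'x lit set" where
  "term_of \<sigma> = {l. pholds \<sigma> l}"

definition term_on :: "('x \<Rightarrow> bool) \<Rightarrow> 'x set \<Rightarrow> 'x lit set" where
  "term_on lam V = {l. lvar l \<in> V \<and> lholds lam l}"

definition neg_term :: "'x lit set \<Rightarrow> 'x lit set" where
  "neg_term T = lneg ` T"

definition models :: "('x \<Rightarrow> bool) \<Rightarrow> 'x lit set set \<Rightarrow> bool" where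
  "models lam F = (\<forall>C\<in>F. \<exists>l\<in>C. lholds lam l)"

definition term_holds :: "('x \<Rightarrow> bool) \<Rightarrow> 'x lit set \<Rightarrow> bool" where
  "term_holds lam T = (\<forall>l\<in>T. lholds lam l)"

definition sat_with :: "'x lit set set \<Rightarrow> 'x lit set \<Rightarrow> bool" where
  "sat_with F T = (\<exists>lam. models lam F \<and> term_holds lam T)"

datatype 'x form = FTrue | FFalse | FVar 'x | FNot "'x form"
  | FAnd "'x form" "'x form" | FOr "'x form" "'x form"

fun eval :: "'x form \<Rightarrow> ('x \<Rightarrow> bool) \<Rightarrow> bool" where
  "eval FTrue lam = True"
| "eval FFalse lam = False"
| "eval (FVar x) lam = lam x"
| "eval (FNot f) lam = (\<not> eval f lam)"
| "eval (FAnd f g) lam = (eval f lam \<and> eval g lam)"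
| "eval (FOr f g) lam = (eval f lam \<or> eval g lam)"

fun fvars :: "'x form \<Rightarrow> 'x set" where
  "fvars FTrue = {}"
| "fvars FFalse = {}"
| "fvars (FVar x) = {x}"
| "fvars (FNot f) = fvars f"
| "fvars (FAnd f g) = fvars f \<union> fvars g"
| "fvars (FOr f g) = fvars f \<union> fvars g"

definition is_definition :: "'x lit set set \<Rightarrow> 'x \<Rightarrow> 'x set \<Rightarrow> 'x form \<Rightarrow> bool" where
  "is_definition \<chi> x X \<psi> =
     (fvars \<psi> \<subseteq> X \<and> (\<forall>lam. models lam \<chi> \<longrightarrow> lam x = eval \<psi> lam))"

text \<open>A DQBF forall U exists e_1(D e_1) ... e_m(D e_m). phi, with the existential
  variables listed (in order) by es and phi a CNF over U \<union> set es.\<close>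
definition dqbf :: "'v set \<Rightarrow> 'v list \<Rightarrow> ('v \<Rightarrow> 'v set) \<Rightarrow> 'v lit set set \<Rightarrow> bool" where
  "dqbf U es D \<phi> =
     (finite U \<and> distinct es \<and> set es \<inter> U = {} \<and> (\<forall>e\<in>set es. D e \<subseteq> U)
      \<and> finite \<phi> \<and> (\<forall>C\<in>\<phi>. finite C \<and> (\<forall>l\<in>C. lvar l \<in> U \<union> set es)))"

definition lift_cnf :: "'v lit set set \<Rightarrow> 'v var lit set set" where
  "lift_cnf \<phi> = (\<lambda>C. map_lit Orig ` C) ` \<phi>"

definition arbiter_clauses :: "'v \<Rightarrow> ('v \<rightharpoonup> bool) \<Rightarrow> 'v var lit set set" where
  "arbiter_clauses e s =
     { {Pos (Ann e s), Neg (Orig e)} \<union> neg_term (map_lit Orig ` term_of s),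
       {Neg (Ann e s), Pos (Orig e)} \<union> neg_term (map_lit Orig ` term_of s) }"

text \<open>phase1 U es D phi i A phiA defs: a state reachable in Phase 1, where the loop
  is currently treating e_(i+1) (0-based index i), A is the set of arbiter
  variables, phiA the arbiter clauses and defs the list of chosen definitions
  psi^1, ..., psi^i.\<close>
inductive phase1 :: "'v set \<Rightarrow> 'v list \<Rightarrow> ('v \<Rightarrow> 'v set) \<Rightarrow> 'v lit set set
    \<Rightarrow> nat \<Rightarrow> 'v var set \<Rightarrow> 'v var lit set set \<Rightarrow> 'v var form list \<Rightarrow> bool"
  for U es D \<phi> where
  init: "phase1 U es D \<phi> 0 {} {} []"
| arb: "\<lbrakk> phase1 U es D \<phi> i A FA ds; i < length es;
         \<not> (\<exists>\<psi>. is_definition (lift_cnf \<phi> \<union> FA) (Orig (es!i)) (Orig ` D (es!i) \<union> A) \<psi>);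
         dom \<xi> = Orig ` D (es!i) \<union> A;
         sat_with (lift_cnf \<phi> \<union> FA) (insert (Pos (Orig (es!i))) (term_of \<xi>));
         sat_with (lift_cnf \<phi> \<union> FA) (insert (Neg (Orig (es!i))) (term_of \<xi>));
         \<sigma> = (\<xi> \<circ> Orig) |` D (es!i) \<rbrakk>
       \<Longrightarrow> phase1 U es D \<phi> i (insert (Ann (es!i) \<sigma>) A) (FA \<union> arbiter_clauses (es!i) \<sigma>) ds"
| def: "\<lbrakk> phase1 U es D \<phi> i A FA ds; i < length es;
         is_definition (lift_cnf \<phi> \<union> FA) (Orig (es!i)) (Orig ` D (es!i) \<union> A) \<psi> \<rbrakk>
       \<Longrightarrow> phase1 U es D \<phi> (Suc i) A FA (ds @ [\<psi>])"

definition psi_def_holds :: "'v list \<Rightarrow> 'v var form list \<Rightarrow> ('v var \<Rightarrow> bool) \<Rightarrow> bool" where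
  "psi_def_holds es ds lam = (\<forall>j<length es. lam (Orig (es!j)) = eval (ds!j) lam)"

definition phase2_clause :: "'v set \<Rightarrow> 'v list \<Rightarrow> 'v lit set set
    \<Rightarrow> 'v var set \<Rightarrow> 'v var lit set set \<Rightarrow> 'v var form list
    \<Rightarrow> ('v var \<rightharpoonup> bool) \<Rightarrow> 'v var lit set \<Rightarrow> bool" where
  "phase2_clause U es \<phi> A FA ds \<tau> K =
     (\<exists>lam \<rho>. \<not> models lam (lift_cnf \<phi>) \<and> psi_def_holds es ds lam \<and> term_holds lam (term_of \<tau>)
        \<and> \<rho> \<subseteq> term_of \<tau> \<union> term_on lam (Orig ` U)
        \<and> \<not> sat_with (lift_cnf \<phi> \<union> FA) \<rho>
        \<and> K = neg_term {l \<in> \<rho>. lvar l \<in> A})"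

text \<open>States (tau, C) reached at the beginning of an iteration of the Phase 2 loop.\<close>
inductive phase2 :: "'v set \<Rightarrow> 'v list \<Rightarrow> 'v lit set set
    \<Rightarrow> 'v var set \<Rightarrow> 'v var lit set set \<Rightarrow> 'v var form list
    \<Rightarrow> ('v var \<rightharpoonup> bool) \<Rightarrow> 'v var lit set set \<Rightarrow> bool"
  for U es \<phi> A FA ds where
  init: "phase2 U es \<phi> A FA ds (\<lambda>x. if x \<in> A then Some True else None) {}"
| step: "\<lbrakk> phase2 U es \<phi> A FA ds \<tau> C; phase2_clause U es \<phi> A FA ds \<tau> K;
          dom \<tau>' = A; \<forall>K'\<in>insert K C. \<exists>l\<in>K'. pholds \<tau>' l \<rbrakk>
        \<Longrightarrow> phase2 U es \<phi> A FA ds \<tau>' (insert K C)"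

definition ann_lit :: "'v lit \<Rightarrow> ('v \<rightharpoonup> bool) \<Rightarrow> 'v var lit" where
  "ann_lit l \<tau> = map_lit (\<lambda>x. Ann x \<tau>) l"

inductive expres_derivable :: "'v set \<Rightarrow> 'v list \<Rightarrow> ('v \<Rightarrow> 'v set) \<Rightarrow> 'v lit set set
    \<Rightarrow> 'v var lit set \<Rightarrow> bool"
  for U es D \<phi> where
  axiom: "\<lbrakk> C \<in> \<phi>; dom \<sigma> = U; \<forall>l\<in>C. lvar l \<in> U \<longrightarrow> pholds \<sigma> (lneg l) \<rbrakk>
          \<Longrightarrow> expres_derivable U es D \<phi>
                {ann_lit l (\<sigma> |` D (lvar l)) | l. l \<in> C \<and> lvar l \<in> set es}"
| res: "\<lbrakk> expres_derivable U es D \<phi> (C1 \<union> {Pos x}); expres_derivable U es D \<phi> (C2 \<union> {Neg x}) \<rbrakk>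
        \<Longrightarrow> expres_derivable U es D \<phi> (C1 \<union> C2)"

end

theory Submission imports Defs begin

lemma res_complete_aux:
  fixes P :: "'x lit set \<Rightarrow> bool"
  assumes res: "\<And>C1 C2 x. P (C1 \<union> {Pos x}) \<Longrightarrow> P (C2 \<union> {Neg x}) \<Longrightarrow> P (C1 \<union> C2)"
  and fin: "finite V" and S: "\<forall>C\<in>S. P C \<and> (\<forall>l\<in>C. lvar l \<in> V)"
  shows "card {x\<in>V. Pos x \<notin> T \<and> Neg x \<notin> T} = n \<Longrightarrow> term_holds lam0 T
    \<Longrightarrow> (\<forall>lam. term_holds lam T \<longrightarrow> (\<exists>C\<in>S. \<forall>l\<in>C. \<not> lholds lam l))
    \<Longrightarrow> \<exists>K'. K' \<subseteq> neg_term T \<and> P K'"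
proof (induction n arbitrary: T lam0)
  case 0
  have cons: "\<not> (Pos x \<in> T \<and> Neg x \<in> T)" for x
    using 0(2) unfolding term_holds_def by (metis lholds.simps(1) lholds.simps(2))
  have dec: "Pos x \<in> T \<or> Neg x \<in> T" if "x \<in> V" for x
    using 0(1) fin that by (auto simp: card_eq_0_iff)
  define lam where "lam x = (Pos x \<in> T)" for x
  have "term_holds lam T" unfolding term_holds_def
  proof
    fix l assume "l \<in> T" then show "lholds lam l" using cons by (cases l) (auto simp: lam_def)
  qed
  then obtain C where C: "C \<in> S" "\<forall>l\<in>C. \<not> lholds lam l" using 0(3) by blast
  have "C \<subseteq> neg_term T"
  proof
    fix l assume l: "l \<in> C"
    then have "lvar l \<in> V" using S C by blast
    have nh: "\<not> lholds lam l" using C(2) l by blast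
    show "l \<in> neg_term T"
    proof (cases l)
      case (Pos y)
      then have "Neg y \<in> T" using nh dec[of y] \<open>lvar l \<in> V\<close> by (auto simp: lam_def)
      then show ?thesis unfolding neg_term_def using Pos by force
    next
      case (Neg y)
      then have "Pos y \<in> T" using nh by (auto simp: lam_def)
      then show ?thesis unfolding neg_term_def using Neg by force
    qed
  qed
  then show ?case using C S by blast
next
  case (Suc n)
  from Suc(2) have "{x\<in>V. Pos x \<notin> T \<and> Neg x \<notin> T} \<noteq> {}" by (metis card.empty nat.distinct(1))
  then obtain x where x: "x \<in> V" "Pos x \<notin> T" "Neg x \<notin> T" by blast
  have c1: "card {y\<in>V. Pos y \<notin> insert (Pos x) T \<and> Neg y \<notin> insert (Pos x) T} = n"
  proof -
    have "{y\<in>V. Pos y \<notin> insert (Pos x) T \<and> Neg y \<notin> insert (Pos x) T} = {x\<in>V. Pos x \<notin> T \<and> Neg x \<notin> T} - {x}"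
      by auto
    then show ?thesis using Suc(2) x fin by simp
  qed
  have c2: "card {y\<in>V. Pos y \<notin> insert (Neg x) T \<and> Neg y \<notin> insert (Neg x) T} = n"
  proof -
    have "{y\<in>V. Pos y \<notin> insert (Neg x) T \<and> Neg y \<notin> insert (Neg x) T} = {x\<in>V. Pos x \<notin> T \<and> Neg x \<notin> T} - {x}"
      by auto
    then show ?thesis using Suc(2) x fin by simp
  qed
  have h1: "term_holds (lam0(x:=True)) (insert (Pos x) T)"
    unfolding term_holds_def
  proof
    fix l assume l: "l \<in> insert (Pos x) T"
    show "lholds (lam0(x:=True)) l"
    proof (cases "l = Pos x")
      case True then show ?thesis by simp
    next
      case False
      then have lT: "l \<in> T" "lholds lam0 l" using l Suc(3) unfolding term_holds_def by auto
      have "lvar l \<noteq> x" using lT(1) x by (cases l) auto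
      then show ?thesis using lT(2) by (cases l) auto
    qed
  qed
  have h2: "term_holds (lam0(x:=False)) (insert (Neg x) T)"
    unfolding term_holds_def
  proof
    fix l assume l: "l \<in> insert (Neg x) T"
    show "lholds (lam0(x:=False)) l"
    proof (cases "l = Neg x")
      case True then show ?thesis by simp
    next
      case False
      then have lT: "l \<in> T" "lholds lam0 l" using l Suc(3) unfolding term_holds_def by auto
      have "lvar l \<noteq> x" using lT(1) x by (cases l) auto
      then show ?thesis using lT(2) by (cases l) auto
    qed
  qed
  have u1: "\<forall>lam. term_holds lam (insert (Pos x) T) \<longrightarrow> (\<exists>C\<in>S. \<forall>l\<in>C. \<not> lholds lam l)"
    using Suc(4) unfolding term_holds_def by blast
  have u2: "\<forall>lam. term_holds lam (insert (Neg x) T) \<longrightarrow> (\<exists>C\<in>S. \<forall>l\<in>C. \<not> lholds lam l)"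
    using Suc(4) unfolding term_holds_def by blast
  obtain K1 where K1: "K1 \<subseteq> neg_term (insert (Pos x) T)" "P K1" using Suc.IH[OF c1 h1 u1] by blast
  obtain K2 where K2: "K2 \<subseteq> neg_term (insert (Neg x) T)" "P K2" using Suc.IH[OF c2 h2 u2] by blast
  show ?case
  proof (cases "Neg x \<in> K1")
    case False
    then have "K1 \<subseteq> neg_term T" using K1 by (auto simp: neg_term_def)
    then show ?thesis using K1 by blast
  next
    case n1: True
    show ?thesis
    proof (cases "Pos x \<in> K2")
      case False
      then have "K2 \<subseteq> neg_term T" using K2 by (auto simp: neg_term_def)
      then show ?thesis using K2 by blast
    next
      case True
      have e1: "K1 = (K1 - {Neg x}) \<union> {Neg x}" using n1 by blast
      have e2: "K2 = (K2 - {Pos x}) \<union> {Pos x}" using True by blast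
      have "P ((K2 - {Pos x}) \<union> (K1 - {Neg x}))"
        using res[of "K2 - {Pos x}" x "K1 - {Neg x}"] K1(2) K2(2) e1 e2 by simp
      moreover have "(K2 - {Pos x}) \<union> (K1 - {Neg x}) \<subseteq> neg_term T"
        using K1(1) K2(1) by (auto simp: neg_term_def)
      ultimately show ?thesis by blast
    qed
  qed
qed

lemma phase1_inv:
  "phase1 U es D \<phi> i A FA ds \<Longrightarrow> (\<forall>a\<in>A. \<exists>e s. a = Ann e s)
     \<and> (\<forall>F\<in>FA. \<exists>e s. F \<in> arbiter_clauses e s \<and> e \<in> set es \<and> dom s = D e)"
proof (induction rule: phase1.induct)
  case init
  then show ?case by simp
next
  case (arb i A FA ds \<xi> \<sigma>)
  have "dom \<sigma> = D (es!i)"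
    using arb(4) unfolding arb(7) by (auto simp: dom_def restrict_map_def)
  moreover have "es!i \<in> set es" using arb(2) by simp
  ultimately show ?case using arb(8) by blast
next
  case (def i A FA ds \<psi>)
  then show ?case by simp
qed

lemma phase2_dom: "phase2 U es \<phi> A FA ds \<tau> C \<Longrightarrow> dom \<tau> = A"
  by (induction rule: phase2.induct) (auto simp: dom_def)

lemma lholds_cong: "f (lvar l) = g (lvar l) \<Longrightarrow> lholds f l = lholds g l"
  by (cases l) auto

theorem proposition1:
  assumes "dqbf U es D \<phi>"
    and "phase1 U es D \<phi> (length es) A FA ds"
    and "phase2 U es \<phi> A FA ds \<tau> C"
    and "phase2_clause U es \<phi> A FA ds \<tau> K"
  shows "\<exists>K'\<subseteq>K. expres_derivable U es D \<phi> K'"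
proof -
  have dq: "finite U" "distinct es" "set es \<inter> U = {}" "\<forall>e\<in>set es. D e \<subseteq> U"
      "finite \<phi>" "\<forall>C\<in>\<phi>. finite C \<and> (\<forall>l\<in>C. lvar l \<in> U \<union> set es)"
    using assms(1) unfolding dqbf_def by auto
  have invA: "\<forall>a\<in>A. \<exists>e s. a = Ann e s"
    and invF: "\<forall>F\<in>FA. \<exists>e s. F \<in> arbiter_clauses e s \<and> e \<in> set es \<and> dom s = D e"
    using phase1_inv[OF assms(2)] by auto
  have domt: "dom \<tau> = A" using phase2_dom[OF assms(3)] .
  obtain lam \<rho> where L: "\<not> models lam (lift_cnf \<phi>)" "psi_def_holds es ds lam"
     "term_holds lam (term_of \<tau>)" "\<rho> \<subseteq> term_of \<tau> \<union> term_on lam (Orig ` U)"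
     "\<not> sat_with (lift_cnf \<phi> \<union> FA) \<rho>" "K = neg_term {l \<in> \<rho>. lvar l \<in> A}"
    using assms(4) unfolding phase2_clause_def by blast
  define \<sigma> :: "_ \<rightharpoonup> bool" where "\<sigma> = (\<lambda>u. if u \<in> U then Some (lam (Orig u)) else None)"
  have doms: "dom \<sigma> = U" by (auto simp: \<sigma>_def dom_def)
  define ax where "ax C = {ann_lit l (\<sigma> |` D (lvar l)) | l. l \<in> C \<and> lvar l \<in> set es}" for C
  define S where "S = ax ` {C \<in> \<phi>. \<forall>l\<in>C. lvar l \<in> U \<longrightarrow> pholds \<sigma> (lneg l)}"
  define V where "V = \<Union> ((\<lambda>C. lvar ` C) ` S)"
  define T where "T = {l \<in> \<rho>. lvar l \<in> A}"
  have finS: "finite S" unfolding S_def using dq(5) by simp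
  have finax: "finite (ax C)" if "C \<in> \<phi>" for C
  proof -
    have "ax C = (\<lambda>l. ann_lit l (\<sigma> |` D (lvar l))) ` {l \<in> C. lvar l \<in> set es}"
      unfolding ax_def by auto
    then show ?thesis using dq(6) that by simp
  qed
  have finV: "finite V" unfolding V_def
  proof (rule finite_Union)
    show "finite ((\<lambda>C. lvar ` C) ` S)" using finS by simp
    show "\<And>M. M \<in> (\<lambda>C. lvar ` C) ` S \<Longrightarrow> finite M" using finax by (auto simp: S_def)
  qed
  have Sder: "\<forall>C\<in>S. expres_derivable U es D \<phi> C \<and> (\<forall>l\<in>C. lvar l \<in> V)"
  proof
    fix C assume CS: "C \<in> S"
    then obtain C0 where C0: "C0 \<in> \<phi>" "\<forall>l\<in>C0. lvar l \<in> U \<longrightarrow> pholds \<sigma> (lneg l)" "C = ax C0"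
      unfolding S_def by blast
    have "expres_derivable U es D \<phi> (ax C0)"
      unfolding ax_def by (rule expres_derivable.axiom[OF C0(1) doms C0(2)])
    moreover have "\<forall>l\<in>C. lvar l \<in> V" using CS unfolding V_def by blast
    ultimately show "expres_derivable U es D \<phi> C \<and> (\<forall>l\<in>C. lvar l \<in> V)" using C0(3) by simp
  qed
  have lamT: "term_holds lam T" unfolding term_holds_def
  proof
    fix l assume "l \<in> T"
    then have "l \<in> term_of \<tau> \<union> term_on lam (Orig ` U)" using L(4) unfolding T_def by blast
    then show "lholds lam l"
    proof
      assume "l \<in> term_of \<tau>" then show ?thesis using L(3) unfolding term_holds_def by blast
    next
      assume "l \<in> term_on lam (Orig ` U)" then show ?thesis by (simp add: term_on_def)
    qed
  qed
  have key: "\<forall>mu. term_holds mu T \<longrightarrow> (\<exists>C\<in>S. \<forall>l\<in>C. \<not> lholds mu l)"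
  proof (intro allI impI, rule ccontr)
    fix mu assume muT: "term_holds mu T" and nS: "\<not> (\<exists>C\<in>S. \<forall>l\<in>C. \<not> lholds mu l)"
    define lam' where "lam' v = (case v of Orig x \<Rightarrow> if x \<in> U then lam (Orig x) else mu (Ann x (\<sigma> |` D x))
       | Ann e s \<Rightarrow> mu (Ann e s))" for v
    have r: "term_holds lam' \<rho>" unfolding term_holds_def
    proof
      fix l assume l: "l \<in> \<rho>"
      show "lholds lam' l"
      proof (cases "lvar l \<in> A")
        case True
        then obtain e s where es: "lvar l = Ann e s" using invA by blast
        have "lholds mu l" using muT l True unfolding term_holds_def T_def by blast
        then show ?thesis using lholds_cong[of lam' l mu] es by (simp add: lam'_def)
      next
        case False
        have "l \<notin> term_of \<tau>"
        proof
          assume "l \<in> term_of \<tau>"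
          then have "lvar l \<in> dom \<tau>" unfolding term_of_def by (cases l) auto
          then show False using False domt by simp
        qed
        then have "l \<in> term_on lam (Orig ` U)" using L(4) l by blast
        then obtain u where u: "lvar l = Orig u" "u \<in> U" "lholds lam l" unfolding term_on_def by auto
        then show ?thesis using lholds_cong[of lam' l lam] by (simp add: lam'_def)
      qed
    qed
    have m1: "models lam' (lift_cnf \<phi>)" unfolding models_def lift_cnf_def
    proof
      fix C' assume "C' \<in> (\<lambda>C. map_lit Orig ` C) ` \<phi>"
      then obtain C where C: "C \<in> \<phi>" "C' = map_lit Orig ` C" by blast
      show "\<exists>l\<in>C'. lholds lam' l"
      proof (cases "\<forall>l\<in>C. lvar l \<in> U \<longrightarrow> pholds \<sigma> (lneg l)")
        case False
        then obtain l where l: "l \<in> C" "lvar l \<in> U" "\<not> pholds \<sigma> (lneg l)" by blast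
        have "lholds lam' (map_lit Orig l)"
          using l by (cases l) (auto simp: lam'_def \<sigma>_def)
        then show ?thesis using C l by blast
      next
        case True
        then have "ax C \<in> S" unfolding S_def using C by blast
        then obtain l' where "l' \<in> ax C" "lholds mu l'" using nS by blast
        then obtain l where l: "l \<in> C" "lvar l \<in> set es" "lholds mu (ann_lit l (\<sigma> |` D (lvar l)))"
          unfolding ax_def by blast
        have "lvar l \<notin> U" using l(2) dq(3) by blast
        then have "lholds lam' (map_lit Orig l)"
          using l(3) by (cases l) (auto simp: lam'_def ann_lit_def)
        then show ?thesis using C l by blast
      qed
    qed
    have m2: "models lam' FA" unfolding models_def
    proof
      fix F assume "F \<in> FA"
      then obtain e s where F: "F \<in> arbiter_clauses e s" "e \<in> set es" "dom s = D e" using invF by blast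
      have DU: "D e \<subseteq> U" using dq(4) F(2) by blast
      show "\<exists>l\<in>F. lholds lam' l"
      proof (cases "\<exists>u\<in>D e. s u \<noteq> \<sigma> u")
        case True
        then obtain u where u: "u \<in> D e" "s u \<noteq> \<sigma> u" by blast
        have "u \<in> dom s" using F(3) u(1) by simp
        then obtain b where b: "s u = Some b" by auto
        have uU: "u \<in> U" using u DU by blast
        have blam: "b \<noteq> lam (Orig u)" using u b uU by (simp add: \<sigma>_def)
        define lt where "lt = (if b then Pos u else Neg u)"
        have "lt \<in> term_of s" unfolding term_of_def lt_def using b by auto
        then have inF: "lneg (map_lit Orig lt) \<in> F"
          using F(1) unfolding arbiter_clauses_def neg_term_def by auto
        have "lholds lam' (lneg (map_lit Orig lt))"
          using blam uU by (cases b) (auto simp: lt_def lam'_def)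
        then show ?thesis using inF by blast
      next
        case False
        then have seq: "s = \<sigma> |` D e"
          using F(3) by (auto simp: restrict_map_def fun_eq_iff dom_def)
        have eU: "e \<notin> U" using F(2) dq(3) by blast
        have eq: "lam' (Orig e) = lam' (Ann e s)" using eU seq by (simp add: lam'_def)
        have "(Pos (Ann e s) \<in> F \<and> Neg (Orig e) \<in> F) \<or> (Neg (Ann e s) \<in> F \<and> Pos (Orig e) \<in> F)"
          using F(1) unfolding arbiter_clauses_def by blast
        then show ?thesis
        proof
          assume a: "Pos (Ann e s) \<in> F \<and> Neg (Orig e) \<in> F"
          show ?thesis
          proof (cases "lam' (Orig e)")
            case True
            then have "lholds lam' (Pos (Ann e s))" using eq by simp
            then show ?thesis using a by blast
          next
            case False
            then have "lholds lam' (Neg (Orig e))" by simp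
            then show ?thesis using a by blast
          qed
        next
          assume a: "Neg (Ann e s) \<in> F \<and> Pos (Orig e) \<in> F"
          show ?thesis
          proof (cases "lam' (Orig e)")
            case True
            then have "lholds lam' (Pos (Orig e))" by simp
            then show ?thesis using a by blast
          next
            case False
            then have "lholds lam' (Neg (Ann e s))" using eq by simp
            then show ?thesis using a by blast
          qed
        qed
      qed
    qed
    have "sat_with (lift_cnf \<phi> \<union> FA) \<rho>"
      unfolding sat_with_def using r m1 m2 by (auto simp: models_def)
    then show False using L(5) by blast
  qed
  have resr: "\<And>C1 C2 x. expres_derivable U es D \<phi> (C1 \<union> {Pos x}) \<Longrightarrow>
      expres_derivable U es D \<phi> (C2 \<union> {Neg x}) \<Longrightarrow> expres_derivable U es D \<phi> (C1 \<union> C2)"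
    by (rule expres_derivable.res)
  have "\<exists>K'. K' \<subseteq> neg_term T \<and> expres_derivable U es D \<phi> K'"
    by (rule res_complete_aux[of "expres_derivable U es D \<phi>" V S T _ lam, OF resr finV Sder refl lamT key])
  then show ?thesis using L(6) unfolding T_def by simp
qed

end
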